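(* Let $\beta>1$ and let $\delta>0$ be fixed and arbitrarily small. Then, as $n\to\infty$, every achievable rate $R$ for the outer channel satisfies $R\le(p_c+\delta)(1-1/\beta)$.
   Context: The outer channel takes as input a binary matrix $\mathbf{X}\in\mathbb{F}_2^{n\times l}$ with rows $\mathbf{x}_1,\dots,\mathbf{x}_n$ and acts in two stages. Channel-1 acts independently on each row and outputs $\mathbf{y}_i$, where - $\mathbf{y}_i=\mathbf{x}_i$ with probability $p_c$; - $\mathbf{y}_i=?$ (an erased row) with probability $p_e$; - $\mathbf{y}_i=\mathbf{e}$ with probability $p_s/(2^l-1)$ for each $\mathbf{e}\in\mathbb{F}_2^l\setminus\{\mathbf{x}_i\}$. Here $p_c+p_e+p_s=1$ and the probabilities $p_c,p_e,p_s$ are fixed. Channel-2 takes the $n$-row matrix $\mathbf{Y}$ (erased rows kept as "?") and outputs $\mathbf{Z}$, a uniformly random permutation of its rows (each of the $n!$ permutations has probability $1/n!$). A code maps $\mathbf{U}\in\mathbb{F}_2^{k\times w}$ injectively to $\mathbf{X}\in\mathbb{F}_2^{n\times l}$ and comes with a decoder $\mathbf{Z}\mapsto\widehat{\mathbf{U}}$. Its rate is $R=kw/(nl)$. We set $\beta=l/\log_2 n$, held fixed as $n\to\infty$. A rate $R$ is achievable if some family of rate-$R$ codes has error probability, for uniformly distributed $\mathbf{U}$, tending to $0$ as $n\to\infty$. *)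

theory Defs
  imports "HOL-Probability.Probability" "HOL-Combinatorics.Permutations"
begin

definition bin_mats :: "nat \<Rightarrow> nat \<Rightarrow> bool list list set" where
  "bin_mats r c = {M. length M = r \<and> (\<forall>row\<in>set M. length row = c)}"

text \<open>Channel-1 acting on a single row x of length l. An erased row is None.\<close>
definition row_chan :: "real \<Rightarrow> real \<Rightarrow> real \<Rightarrow> nat \<Rightarrow> bool list \<Rightarrow> bool list option pmf" where
  "row_chan pc pe ps l x = embed_pmf (\<lambda>y. case y of
       None \<Rightarrow> pe
     | Some e \<Rightarrow> (if e = x then pc
                 else if length e = l then ps / (2 ^ l - 1) else 0))"

fun chan1 :: "real \<Rightarrow> real \<Rightarrow> real \<Rightarrow> nat \<Rightarrow> bool list list \<Rightarrow> bool list option list pmf" where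
  "chan1 pc pe ps l [] = return_pmf []"
| "chan1 pc pe ps l (x # xs) =
     bind_pmf (row_chan pc pe ps l x) (\<lambda>y. map_pmf (\<lambda>ys. y # ys) (chan1 pc pe ps l xs))"

definition chan2 :: "'a list \<Rightarrow> 'a list pmf" where
  "chan2 Y = map_pmf (\<lambda>\<sigma>. map (\<lambda>i. Y ! \<sigma> i) [0..<length Y])
                     (pmf_of_set {\<sigma>. \<sigma> permutes {0..<length Y}})"

definition outer_chan :: "real \<Rightarrow> real \<Rightarrow> real \<Rightarrow> nat \<Rightarrow> bool list list \<Rightarrow> bool list option list pmf" where
  "outer_chan pc pe ps l X = bind_pmf (chan1 pc pe ps l X) chan2"

definition is_code :: "nat \<Rightarrow> nat \<Rightarrow> nat \<Rightarrow> nat \<Rightarrow> (bool list list \<Rightarrow> bool list list) \<Rightarrow> bool" where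
  "is_code n l k w enc \<longleftrightarrow> inj_on enc (bin_mats k w) \<and> enc ` bin_mats k w \<subseteq> bin_mats n l"

definition err_prob :: "real \<Rightarrow> real \<Rightarrow> real \<Rightarrow> nat \<Rightarrow> nat \<Rightarrow> nat \<Rightarrow>
    (bool list list \<Rightarrow> bool list list) \<Rightarrow> (bool list option list \<Rightarrow> bool list list) \<Rightarrow> real" where
  "err_prob pc pe ps l k w enc dec =
     (\<Sum>U\<in>bin_mats k w. measure_pmf.prob (outer_chan pc pe ps l (enc U)) {Z. dec Z \<noteq> U})
       / real (card (bin_mats k w))"

definition achievable_rate :: "real \<Rightarrow> real \<Rightarrow> real \<Rightarrow> real \<Rightarrow> real \<Rightarrow> bool" where
  "achievable_rate pc pe ps beta R \<longleftrightarrow>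
     (\<exists>(l::nat \<Rightarrow> nat) (k::nat \<Rightarrow> nat) (w::nat \<Rightarrow> nat) enc dec.
        (\<forall>n. is_code n (l n) (k n) (w n) (enc n))
      \<and> (\<lambda>n. real (l n) / log 2 (real n)) \<longlonglongrightarrow> beta
      \<and> (\<lambda>n. real (k n * w n) / real (n * l n)) \<longlonglongrightarrow> R
      \<and> (\<lambda>n. err_prob pc pe ps (l n) (k n) (w n) (enc n) (dec n)) \<longlonglongrightarrow> 0)"

end

theory Submission
  imports Defs "HOL-Real_Asymp.Real_Asymp"
begin

definition rowsL :: "nat \<Rightarrow> bool list set" where "rowsL l = {e. length e = l}"
definition Aopt :: "nat \<Rightarrow> bool list option set" where "Aopt l = insert None (Some ` rowsL l)"

definition rowf :: "real \<Rightarrow> real \<Rightarrow> real \<Rightarrow> nat \<Rightarrow> bool list \<Rightarrow> bool list option \<Rightarrow> real" where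
  "rowf pc pe ps l x a = (case a of None \<Rightarrow> pe
     | Some e \<Rightarrow> (if e = x then pc else if length e = l then ps / (2 ^ l - 1) else 0))"

lemma finite_rows[simp]: "finite (rowsL l)" and card_rows: "card (rowsL l) = 2 ^ l"
proof -
  have "rowsL l = {xs. set xs \<subseteq> UNIV \<and> length xs = l}" by (auto simp: rowsL_def)
  then show "finite (rowsL l)" "card (rowsL l) = 2 ^ l"
    using card_lists_length_eq[of "UNIV::bool set" l] finite_lists_length_eq[of "UNIV::bool set" l]
    by auto
qed

lemma finite_Aopt[simp]: "finite (Aopt l)" by (simp add: Aopt_def)

lemma sum_Aopt: "(\<Sum>a\<in>Aopt l. f a) = f None + (\<Sum>e\<in>rowsL l. f (Some e))"
  unfolding Aopt_def by (subst sum.insert) (auto simp: sum.reindex inj_on_def)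

lemma rowf_sum:
  assumes "length x = l" "l \<ge> 1"
  shows "(\<Sum>a\<in>Aopt l. rowf pc pe ps l x a) = pc + pe + ps"
proof -
  have xr: "x \<in> rowsL l" using assms by (simp add: rowsL_def)
  have "(\<Sum>e\<in>rowsL l. rowf pc pe ps l x (Some e)) = pc + (\<Sum>e\<in>rowsL l - {x}. ps / (2 ^ l - 1))"
    using xr finite_rows[of l] by (subst sum.remove[of _ x]) (auto simp: rowf_def rowsL_def intro!: sum.cong)
  also have "\<dots> = pc + ps"
  proof -
    have "(2::real) ^ l \<ge> 2" using assms(2) by (metis power_one_right power_increasing one_le_numeral)
    then have "real (card (rowsL l - {x})) = 2 ^ l - 1" using xr by (simp add: card_rows)
    then show ?thesis using \<open>(2::real) ^ l \<ge> 2\<close> by simp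
  qed
  finally show ?thesis by (simp add: sum_Aopt rowf_def)
qed

lemma pmf_row_chan:
  assumes "length x = l" "l \<ge> 1" "pc \<ge> 0" "pe \<ge> 0" "ps \<ge> 0" "pc + pe + ps = 1"
  shows "pmf (row_chan pc pe ps l x) a = rowf pc pe ps l x a"
proof -
  have eq: "row_chan pc pe ps l x = embed_pmf (rowf pc pe ps l x)"
    unfolding row_chan_def rowf_def ..
  have nn: "\<And>a. rowf pc pe ps l x a \<ge> 0"
  proof -
    fix a
    have "(2::real) ^ l \<ge> 1" by simp
    then show "rowf pc pe ps l x a \<ge> 0" using assms by (auto simp: rowf_def split: option.split)
  qed
  have out: "\<And>a. a \<notin> Aopt l \<Longrightarrow> rowf pc pe ps l x a = 0"
    using assms(1) by (auto simp: rowf_def Aopt_def rowsL_def split: option.split)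
  have "(\<integral>\<^sup>+a. ennreal (rowf pc pe ps l x a) \<partial>count_space UNIV) = (\<Sum>a\<in>Aopt l. ennreal (rowf pc pe ps l x a))"
    by (rule nn_integral_count_space') (use out in auto)
  also have "\<dots> = ennreal (\<Sum>a\<in>Aopt l. rowf pc pe ps l x a)"
    using nn by (simp add: sum_ennreal)
  also have "\<dots> = 1" using rowf_sum[OF assms(1,2)] assms(6) by simp
  finally show ?thesis unfolding eq by (subst pmf_embed_pmf) (use nn in auto)
qed

lemma pmf_map_Cons: "pmf (map_pmf (Cons a) p) (b # ys) = (if a = b then pmf p ys else 0)"
proof (cases "a = b")
  case True
  have "inj (Cons a)" by (simp add: inj_def)
  then show ?thesis using True pmf_map_inj'[of "Cons a" p ys] by simp
next
  case False
  then have "b # ys \<notin> set_pmf (map_pmf (Cons a) p)" by auto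
  then show ?thesis using False by (simp add: set_pmf_eq)
qed

lemma pmf_map_Cons_Nil: "pmf (map_pmf (Cons a) p) [] = 0"
proof -
  have "[] \<notin> set_pmf (map_pmf (Cons a) p)" by auto
  then show ?thesis by (simp add: set_pmf_eq)
qed

lemma pmf_chan1:
  assumes "\<forall>x\<in>set X. length x = l" "l \<ge> 1" "pc \<ge> 0" "pe \<ge> 0" "ps \<ge> 0" "pc + pe + ps = 1"
  shows "pmf (chan1 pc pe ps l X) y =
    (if length y = length X then (\<Prod>i<length X. rowf pc pe ps l (X!i) (y!i)) else 0)"
  using assms(1)
proof (induction X arbitrary: y)
  case Nil
  then show ?case by (cases y) (auto simp: pmf_return)
next
  case (Cons x X)
  have lx: "length x = l" using Cons.prems by simp
  show ?case
  proof (cases y)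
    case Nil
    then show ?thesis by (simp add: pmf_bind pmf_map_Cons_Nil)
  next
    case (Cons b ys)
    have "pmf (chan1 pc pe ps l (x # X)) y =
       measure_pmf.expectation (row_chan pc pe ps l x) (\<lambda>a. if a = b then pmf (chan1 pc pe ps l X) ys else 0)"
      using Cons by (simp add: pmf_bind pmf_map_Cons)
    also have "\<dots> = (\<Sum>a\<in>{b}. pmf (row_chan pc pe ps l x) a *\<^sub>R (if a = b then pmf (chan1 pc pe ps l X) ys else 0))"
      by (rule integral_measure_pmf) (auto split: if_splits)
    also have "\<dots> = rowf pc pe ps l x b * pmf (chan1 pc pe ps l X) ys"
      using pmf_row_chan[OF lx assms(2-6)] by simp
    finally show ?thesis using Cons Cons.IH[of ys] Cons.prems
      by (simp add: prod.lessThan_Suc_shift del: prod.lessThan_Suc)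
  qed
qed

definition Yn :: "nat \<Rightarrow> nat \<Rightarrow> bool list option list set" where
  "Yn l n = {y. length y = n \<and> set y \<subseteq> Aopt l}"

lemma finite_Yn[simp]: "finite (Yn l n)"
  unfolding Yn_def using finite_lists_length_eq[of "Aopt l" n] by (simp add: conj_commute)

lemma rowf_nz: "length x = l \<Longrightarrow> rowf pc pe ps l x a \<noteq> 0 \<Longrightarrow> a \<in> Aopt l"
  by (auto simp: rowf_def Aopt_def rowsL_def split: option.splits if_splits)

lemma rowf_nonneg: "pc \<ge> 0 \<Longrightarrow> pe \<ge> 0 \<Longrightarrow> ps \<ge> 0 \<Longrightarrow> rowf pc pe ps l x a \<ge> 0"
proof -
  assume a: "pc \<ge> 0" "pe \<ge> 0" "ps \<ge> 0"
  have "(2::real) ^ l \<ge> 1" by simp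
  then show ?thesis using a by (auto simp: rowf_def split: option.split)
qed

lemma set_pmf_chan1:
  assumes "\<forall>x\<in>set X. length x = l" "l \<ge> 1" "pc \<ge> 0" "pe \<ge> 0" "ps \<ge> 0" "pc + pe + ps = 1"
  shows "set_pmf (chan1 pc pe ps l X) \<subseteq> Yn l (length X)"
proof
  fix y assume "y \<in> set_pmf (chan1 pc pe ps l X)"
  then have nz: "pmf (chan1 pc pe ps l X) y \<noteq> 0" by (simp add: set_pmf_eq)
  then have len: "length y = length X" using pmf_chan1[OF assms, of y] by (auto split: if_splits)
  have "\<forall>i<length X. rowf pc pe ps l (X!i) (y!i) \<noteq> 0"
    using nz len pmf_chan1[OF assms, of y] by auto
  then have "\<forall>i<length y. y!i \<in> Aopt l" using len assms(1) rowf_nz by (metis nth_mem)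
  then show "y \<in> Yn l (length X)" using len by (auto simp: Yn_def in_set_conv_nth)
qed

lemma prob_outer:
  assumes "\<forall>x\<in>set X. length x = l" "l \<ge> 1" "pc \<ge> 0" "pe \<ge> 0" "ps \<ge> 0" "pc + pe + ps = 1"
  shows "measure_pmf.prob (outer_chan pc pe ps l X) A =
     (\<Sum>y\<in>Yn l (length X). (\<Prod>i<length X. rowf pc pe ps l (X!i) (y!i)) * measure_pmf.prob (chan2 y) A)"
proof -
  let ?n = "length X"
  have nn: "\<And>y. 0 \<le> (\<Prod>i<length X. rowf pc pe ps l (X!i) (y!i))"
    by (rule prod_nonneg) (use rowf_nonneg assms in auto)
  have "emeasure (measure_pmf (outer_chan pc pe ps l X)) A =
      (\<integral>\<^sup>+ y. emeasure (measure_pmf (chan2 y)) A \<partial>measure_pmf (chan1 pc pe ps l X))"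
    unfolding outer_chan_def by (rule emeasure_bind_pmf)
  also have "\<dots> = (\<Sum>y\<in>Yn l ?n. emeasure (measure_pmf (chan2 y)) A * ennreal (pmf (chan1 pc pe ps l X) y))"
    by (rule nn_integral_measure_pmf_support) (use set_pmf_chan1[OF assms] in auto)
  also have "\<dots> = (\<Sum>y\<in>Yn l ?n. ennreal ((\<Prod>i<length X. rowf pc pe ps l (X!i) (y!i)) * measure_pmf.prob (chan2 y) A))"
    apply (rule sum.cong[OF refl])
    apply (subst pmf_chan1[OF assms])
    apply (auto simp: Yn_def measure_pmf.emeasure_eq_measure ennreal_mult' nn mult.commute)
    done
  also have "\<dots> = ennreal (\<Sum>y\<in>Yn l ?n. (\<Prod>i<length X. rowf pc pe ps l (X!i) (y!i)) * measure_pmf.prob (chan2 y) A)"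
    by (rule sum_ennreal) (simp add: nn)
  finally show ?thesis
    by (simp add: measure_pmf.emeasure_eq_measure nn sum_nonneg)
qed

lemma chan2_alt: "chan2 y = map_pmf (\<lambda>\<sigma>. permute_list \<sigma> y) (pmf_of_set {\<sigma>. \<sigma> permutes {..<length y}})"
  unfolding chan2_def permute_list_def by (simp add: atLeast0LessThan)

lemma chan2_mset:
  assumes "mset y1 = mset y2"
  shows "chan2 y1 = chan2 y2"
proof -
  obtain p where p: "p permutes {..<length y2}" "permute_list p y2 = y1"
    using mset_eq_permutation[OF assms] by blast
  have len: "length y1 = length y2" using p(2) by auto
  let ?P = "{\<sigma>. \<sigma> permutes {..<length y2}}"
  have fin: "finite ?P" by (simp add: finite_permutations)
  have ne: "?P \<noteq> {}" using permutes_id by blast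
  have injp: "inj p" using p(1) by (rule permutes_inj)
  have inj: "inj_on ((\<circ>) p) ?P"
  proof (rule inj_onI)
    fix a b assume "p \<circ> a = p \<circ> b"
    then have "\<And>x. p (a x) = p (b x)" by (metis comp_apply)
    then show "a = b" using injp by (auto simp: inj_def)
  qed
  have img: "(\<circ>) p ` ?P = ?P"
  proof
    show "(\<circ>) p ` ?P \<subseteq> ?P" using p(1) by (auto intro: permutes_compose)
    show "?P \<subseteq> (\<circ>) p ` ?P"
    proof
      fix \<tau> assume t: "\<tau> \<in> ?P"
      have "inv p \<circ> \<tau> \<in> ?P" using t p(1) by (auto intro: permutes_compose permutes_inv)
      moreover have "\<tau> = p \<circ> (inv p \<circ> \<tau>)"
        using p(1) by (simp add: o_assoc permutes_inv_o)
      ultimately show "\<tau> \<in> (\<circ>) p ` ?P" by blast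
    qed
  qed
  have "chan2 y1 = map_pmf (\<lambda>\<sigma>. permute_list \<sigma> (permute_list p y2)) (pmf_of_set ?P)"
    unfolding chan2_alt p(2)[symmetric] by simp
  also have "\<dots> = map_pmf (\<lambda>\<sigma>. permute_list (p \<circ> \<sigma>) y2) (pmf_of_set ?P)"
    by (rule map_pmf_cong) (auto simp: set_pmf_of_set[OF ne fin] intro!: permute_list_compose[symmetric])
  also have "\<dots> = map_pmf (\<lambda>\<sigma>. permute_list \<sigma> y2) (map_pmf ((\<circ>) p) (pmf_of_set ?P))"
    by (simp add: pmf.map_comp o_def)
  also have "map_pmf ((\<circ>) p) (pmf_of_set ?P) = pmf_of_set ?P"
    using map_pmf_of_set_inj[OF inj ne fin] img by simp
  finally show ?thesis unfolding chan2_alt by simp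
qed

lemma sum_prob_dec_le1:
  assumes "finite A"
  shows "(\<Sum>U\<in>A. measure_pmf.prob P {z. dec z = U}) \<le> 1"
proof -
  have "(\<Sum>U\<in>A. measure_pmf.prob P {z. dec z = U}) = measure_pmf.prob P (\<Union>U\<in>A. {z. dec z = U})"
    by (rule measure_pmf.finite_measure_finite_Union[symmetric]) (auto simp: assms disjoint_family_on_def)
  also have "\<dots> \<le> 1" by simp
  finally show ?thesis .
qed



lemma sum_prod_lists:
  fixes \<phi> :: "nat \<Rightarrow> 'a \<Rightarrow> real"
  assumes "finite A"
  shows "(\<Sum>y\<in>{y. length y = n \<and> set y \<subseteq> A}. \<Prod>i<n. \<phi> i (y!i)) = (\<Prod>i<n. \<Sum>a\<in>A. \<phi> i a)"
proof (induction n arbitrary: \<phi>)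
  case 0
  have "{y. length y = 0 \<and> set y \<subseteq> A} = {[]}" by auto
  then show ?case by simp
next
  case (Suc n)
  let ?Y = "\<lambda>n. {y. length y = n \<and> set y \<subseteq> A}"
  have eq: "?Y (Suc n) = (\<lambda>(a, ys). a # ys) ` (A \<times> ?Y n)"
  proof
    show "?Y (Suc n) \<subseteq> (\<lambda>(a, ys). a # ys) ` (A \<times> ?Y n)"
    proof
      fix y assume "y \<in> ?Y (Suc n)"
      then obtain a ys where "y = a # ys" "a \<in> A" "ys \<in> ?Y n" by (cases y) auto
      then show "y \<in> (\<lambda>(a, ys). a # ys) ` (A \<times> ?Y n)" by force
    qed
  qed auto
  have inj: "inj_on (\<lambda>(a, ys). a # ys) (A \<times> ?Y n)" by (auto simp: inj_on_def)
  have "(\<Sum>y\<in>?Y (Suc n). \<Prod>i<Suc n. \<phi> i (y!i)) = (\<Sum>(a, ys)\<in>A \<times> ?Y n. \<phi> 0 a * (\<Prod>i<n. \<phi> (Suc i) (ys!i)))"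
    unfolding eq by (subst sum.reindex[OF inj]) (auto simp: prod.lessThan_Suc_shift simp del: prod.lessThan_Suc intro!: sum.cong)
  also have "\<dots> = (\<Sum>a\<in>A. \<phi> 0 a) * (\<Sum>ys\<in>?Y n. \<Prod>i<n. \<phi> (Suc i) (ys!i))"
    by (subst sum.cartesian_product[symmetric]) (rule sum_product[symmetric])
  also have "\<dots> = (\<Sum>a\<in>A. \<phi> 0 a) * (\<Prod>i<n. \<Sum>a\<in>A. \<phi> (Suc i) a)"
    using Suc.IH[of "\<lambda>i. \<phi> (Suc i)"] by simp
  finally show ?case by (simp add: prod.lessThan_Suc_shift del: prod.lessThan_Suc)
qed

lemma orbit_bound:
  fixes q :: "'y list \<Rightarrow> 'u \<Rightarrow> real"
  assumes finY: "finite Y" and finM: "finite M"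
    and uniq: "\<And>U y1 y2. U \<in> M \<Longrightarrow> y1 \<in> Y \<Longrightarrow> y2 \<in> Y \<Longrightarrow> R U y1 \<Longrightarrow> R U y2 \<Longrightarrow> y1 = y2"
    and qms: "\<And>y1 y2. mset y1 = mset y2 \<Longrightarrow> q y1 = q y2"
    and qsum: "\<And>y M'. M' \<subseteq> M \<Longrightarrow> (\<Sum>U\<in>M'. q y U) \<le> 1"
  shows "(\<Sum>U\<in>M. \<Sum>y\<in>Y. if R U y then q y U else 0) \<le> card (mset ` Y)"
proof -
  define B where "B y = {U\<in>M. R U y}" for y
  have "(\<Sum>U\<in>M. \<Sum>y\<in>Y. if R U y then q y U else 0) = (\<Sum>y\<in>Y. \<Sum>U\<in>M. if R U y then q y U else 0)"
    by (rule sum.swap)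
  also have "\<dots> = (\<Sum>y\<in>Y. \<Sum>U\<in>B y. q y U)"
    unfolding B_def by (rule sum.cong[OF refl]) (simp add: sum.inter_filter finM)
  also have "\<dots> = (\<Sum>ms\<in>mset ` Y. \<Sum>y\<in>{y\<in>Y. mset y = ms}. \<Sum>U\<in>B y. q y U)"
    by (rule sum.group[symmetric]) (auto simp: finY)
  also have "\<dots> \<le> (\<Sum>ms\<in>mset ` Y. 1)"
  proof (rule sum_mono)
    fix ms assume "ms \<in> mset ` Y"
    then obtain y0 where y0: "y0 \<in> Y" "mset y0 = ms" by blast
    let ?G = "{y\<in>Y. mset y = ms}"
    have "(\<Sum>y\<in>?G. \<Sum>U\<in>B y. q y U) = (\<Sum>y\<in>?G. \<Sum>U\<in>B y. q y0 U)"
    proof (intro sum.cong refl)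
      fix y U assume "y \<in> ?G"
      then have "q y = q y0" using y0 by (intro qms) simp
      then show "q y U = q y0 U" by simp
    qed
    also have "\<dots> = (\<Sum>U\<in>(\<Union>y\<in>?G. B y). q y0 U)"
    proof (rule sum.UNION_disjoint[symmetric])
      show "finite ?G" using finY by simp
      show "\<forall>y\<in>?G. finite (B y)" using finM by (simp add: B_def)
      show "\<forall>i\<in>?G. \<forall>j\<in>?G. i \<noteq> j \<longrightarrow> B i \<inter> B j = {}"
        unfolding B_def by (blast dest: uniq)
    qed
    also have "\<dots> \<le> 1" by (rule qsum) (auto simp: B_def)
    finally show "(\<Sum>y\<in>?G. \<Sum>U\<in>B y. q y U) \<le> 1" .
  qed
  also have "\<dots> = card (mset ` Y)" by simp
  finally show ?thesis .
qed

definition gf :: "real \<Rightarrow> real \<Rightarrow> nat \<Rightarrow> bool list option \<Rightarrow> real" where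
  "gf pe ps l a = (case a of None \<Rightarrow> pe | Some e \<Rightarrow> if length e = l then ps / (2 ^ l - 1) else 0)"

definition bconst :: "real \<Rightarrow> real \<Rightarrow> nat \<Rightarrow> real" where
  "bconst pe ps l = pe + 2 ^ l * (ps / (2 ^ l - 1))"

definition GS :: "real \<Rightarrow> real \<Rightarrow> nat \<Rightarrow> nat set \<Rightarrow> nat \<Rightarrow> bool list option list \<Rightarrow> real" where
  "GS pe ps l S n y = (\<Prod>i\<in>{..<n} - S. gf pe ps l (y!i))"

lemma gf_nonneg: "pe \<ge> 0 \<Longrightarrow> ps \<ge> 0 \<Longrightarrow> gf pe ps l a \<ge> 0"
proof -
  assume a: "pe \<ge> 0" "ps \<ge> 0"
  have "(2::real) ^ l \<ge> 1" by simp
  then show ?thesis using a by (auto simp: gf_def split: option.split)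
qed

lemma GS_nonneg: "pe \<ge> 0 \<Longrightarrow> ps \<ge> 0 \<Longrightarrow> GS pe ps l S n y \<ge> 0"
  unfolding GS_def by (rule prod_nonneg) (simp add: gf_nonneg)

lemma sum_gf: "(\<Sum>a\<in>Aopt l. gf pe ps l a) = bconst pe ps l"
proof -
  have "(\<Sum>e\<in>rowsL l. gf pe ps l (Some e)) = (\<Sum>e\<in>rowsL l. ps / (2 ^ l - 1))"
    by (rule sum.cong) (auto simp: gf_def rowsL_def)
  then show ?thesis by (simp add: sum_Aopt bconst_def card_rows gf_def)
qed

lemma prod_if_const:
  fixes c :: real
  assumes "finite S"
  shows "(\<Prod>i\<in>S. if P i then c else 0) = (if \<forall>i\<in>S. P i then c ^ card S else 0)"
proof (cases "\<forall>i\<in>S. P i")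
  case True
  then have "(\<Prod>i\<in>S. if P i then c else 0) = (\<Prod>i\<in>S. c)" by (intro prod.cong) auto
  then show ?thesis using True by simp
next
  case False
  then obtain i where "i \<in> S" "\<not> P i" by blast
  then show ?thesis using assms by (subst prod_zero) auto
qed

lemma sum_pattern_GS:
  assumes S: "S \<subseteq> {..<n}" and c: "\<And>i. i \<in> S \<Longrightarrow> c i \<in> Aopt l"
  shows "(\<Sum>y\<in>Yn l n. (if \<forall>i\<in>S. y!i = c i then 1 else 0) * GS pe ps l S n y) = bconst pe ps l ^ (n - card S)"
proof -
  define \<phi> where "\<phi> i a = (if i \<in> S then (if a = c i then 1 else 0) else gf pe ps l a)" for i a
  have finS: "finite S" using S finite_subset by blast
  have "(\<Sum>y\<in>Yn l n. (if \<forall>i\<in>S. y!i = c i then 1 else 0) * GS pe ps l S n y) = (\<Sum>y\<in>Yn l n. \<Prod>i<n. \<phi> i (y!i))"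
  proof (rule sum.cong[OF refl])
    fix y
    have "(\<Prod>i<n. \<phi> i (y!i)) = (\<Prod>i\<in>{..<n} - S. \<phi> i (y!i)) * (\<Prod>i\<in>S. \<phi> i (y!i))"
      by (rule prod.subset_diff[OF S]) simp
    also have "(\<Prod>i\<in>{..<n} - S. \<phi> i (y!i)) = GS pe ps l S n y"
      unfolding GS_def \<phi>_def by (intro prod.cong) auto
    also have "(\<Prod>i\<in>S. \<phi> i (y!i)) = (\<Prod>i\<in>S. if y!i = c i then 1 else 0)"
      unfolding \<phi>_def by (intro prod.cong) auto
    also have "\<dots> = (if \<forall>i\<in>S. y!i = c i then 1 else 0)"
      using prod_if_const[OF finS, of "\<lambda>i. y!i = c i" 1] by simp
    finally show "(if \<forall>i\<in>S. y!i = c i then 1 else 0) * GS pe ps l S n y = (\<Prod>i<n. \<phi> i (y!i))"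
      by simp
  qed
  also have "\<dots> = (\<Prod>i<n. \<Sum>a\<in>Aopt l. \<phi> i a)"
    unfolding Yn_def by (rule sum_prod_lists) simp
  also have "\<dots> = (\<Prod>i<n. if i \<in> S then 1 else bconst pe ps l)"
  proof (rule prod.cong[OF refl])
    fix i assume "i \<in> {..<n}"
    show "(\<Sum>a\<in>Aopt l. \<phi> i a) = (if i \<in> S then 1 else bconst pe ps l)"
    proof (cases "i \<in> S")
      case True
      then have "(\<Sum>a\<in>Aopt l. \<phi> i a) = (\<Sum>a\<in>Aopt l. if a = c i then 1 else 0)"
        unfolding \<phi>_def by simp
      also have "\<dots> = 1" using c[OF True] by (simp add: sum.delta)
      finally show ?thesis using True by simp
    next
      case False
      then show ?thesis unfolding \<phi>_def by (simp add: sum_gf)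
    qed
  qed
  also have "\<dots> = (\<Prod>i\<in>{..<n} - S. bconst pe ps l)"
  proof -
    have "(\<Prod>i<n. if i \<in> S then 1 else bconst pe ps l) = (\<Prod>i\<in>{..<n} - S. if i \<in> S then 1 else bconst pe ps l) * (\<Prod>i\<in>S. if i \<in> S then 1 else bconst pe ps l)"
      by (rule prod.subset_diff[OF S]) simp
    then show ?thesis by simp
  qed
  also have "\<dots> = bconst pe ps l ^ (n - card S)"
    using S finS by (simp add: card_Diff_subset)
  finally show ?thesis .
qed

lemma mset_split:
  assumes "length y = n" "S \<subseteq> {..<n}"
  shows "mset y = image_mset (nth y) (mset_set S) + image_mset (nth y) (mset_set ({..<n} - S))"
proof -
  have "mset y = image_mset (nth y) (mset [0..<n])" using assms(1) by (metis map_nth mset_map)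
  also have "mset [0..<n] = mset_set {..<n}" by (simp add: atLeast0LessThan)
  also have "{..<n} = S \<union> ({..<n} - S)" using assms(2) by blast
  also have "mset_set (S \<union> ({..<n} - S)) = mset_set S + mset_set ({..<n} - S)"
    by (rule mset_set_Union) (use assms(2) finite_subset in auto)
  finally show ?thesis by simp
qed

lemma main_part:
  fixes q :: "bool list option list \<Rightarrow> 'u \<Rightarrow> real"
  assumes S: "S \<subseteq> {..<n}" and finM: "finite M"
    and XM: "\<And>U. U \<in> M \<Longrightarrow> length (X U) = n \<and> (\<forall>r\<in>set (X U). length r = l)"
    and qnn: "\<And>y U. q y U \<ge> 0"
    and qms: "\<And>y1 y2. mset y1 = mset y2 \<Longrightarrow> q y1 = q y2"
    and qsum: "\<And>y M'. M' \<subseteq> M \<Longrightarrow> (\<Sum>U\<in>M'. q y U) \<le> 1"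
    and pe: "pe \<ge> 0" and ps: "ps \<ge> 0"
  shows "(\<Sum>U\<in>M. \<Sum>y\<in>Yn l n. (if \<forall>i\<in>S. y!i = Some (X U ! i) then 1 else 0) * GS pe ps l S n y * q y U)
     \<le> real (card (multisets_of_size (Some ` rowsL l) (card S))) * bconst pe ps l ^ (n - card S)"
proof -
  define \<kappa> where "\<kappa> y = map (\<lambda>i. if i \<in> S then None else y!i) [0..<n]" for y :: "bool list option list"
  define agr where "agr U y = (\<forall>i\<in>S. y!i = Some (X U ! i))" for U y
  define Bj where "Bj = real (card (multisets_of_size (Some ` rowsL l) (card S)))"
  let ?G = "GS pe ps l S n"
  have \<kappa>nth: "\<And>y i. i < n \<Longrightarrow> \<kappa> y ! i = (if i \<in> S then None else y!i)" by (simp add: \<kappa>_def)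
  have \<kappa>len: "\<And>y. length (\<kappa> y) = n" by (simp add: \<kappa>_def)
  have \<kappa>img: "\<kappa> ` Yn l n = {v\<in>Yn l n. \<forall>i\<in>S. v!i = None}"
  proof
    show "\<kappa> ` Yn l n \<subseteq> {v\<in>Yn l n. \<forall>i\<in>S. v!i = None}"
    proof
      fix v assume "v \<in> \<kappa> ` Yn l n"
      then obtain y where y: "y \<in> Yn l n" "v = \<kappa> y" by blast
      have "\<forall>i<n. v!i \<in> Aopt l"
        using y by (auto simp: \<kappa>nth Yn_def Aopt_def intro: nth_mem dest!: subsetD)
      then have "set v \<subseteq> Aopt l" using y(2) \<kappa>len by (auto simp: in_set_conv_nth)
      moreover have "\<forall>i\<in>S. v!i = None" using y(2) S \<kappa>nth by auto
      ultimately show "v \<in> {v\<in>Yn l n. \<forall>i\<in>S. v!i = None}" using y(2) \<kappa>len by (simp add: Yn_def)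
    qed
  next
    show "{v\<in>Yn l n. \<forall>i\<in>S. v!i = None} \<subseteq> \<kappa> ` Yn l n"
    proof
      fix v assume v: "v \<in> {v\<in>Yn l n. \<forall>i\<in>S. v!i = None}"
      then have "\<kappa> v = v" by (intro nth_equalityI) (auto simp: \<kappa>len \<kappa>nth Yn_def)
      then show "v \<in> \<kappa> ` Yn l n" using v by (metis (no_types, lifting) image_eqI mem_Collect_eq)
    qed
  qed
  have Gk: "\<And>y. ?G (\<kappa> y) = ?G y"
    unfolding GS_def by (intro prod.cong) (auto simp: \<kappa>nth)
  have "(\<Sum>U\<in>M. \<Sum>y\<in>Yn l n. (if agr U y then 1 else 0) * ?G y * q y U)
     = (\<Sum>y\<in>Yn l n. \<Sum>U\<in>M. (if agr U y then 1 else 0) * ?G y * q y U)"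
    by (rule sum.swap)
  also have "\<dots> = (\<Sum>v\<in>\<kappa> ` Yn l n. \<Sum>y\<in>{y\<in>Yn l n. \<kappa> y = v}. \<Sum>U\<in>M. (if agr U y then 1 else 0) * ?G y * q y U)"
    by (rule sum.group[symmetric]) auto
  also have "\<dots> \<le> (\<Sum>v\<in>\<kappa> ` Yn l n. ?G v * Bj)"
  proof (rule sum_mono)
    fix v assume v: "v \<in> \<kappa> ` Yn l n"
    define Yv where "Yv = {y\<in>Yn l n. \<kappa> y = v \<and> (\<forall>i\<in>S. y!i \<in> Some ` rowsL l)}"
    have e0: "(\<Sum>y\<in>{y\<in>Yn l n. \<kappa> y = v}. \<Sum>U\<in>M. (if agr U y then 1 else 0) * ?G y * q y U)
        = (\<Sum>y\<in>{y\<in>Yn l n. \<kappa> y = v}. \<Sum>U\<in>M. ?G v * (if agr U y then q y U else 0))"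
    proof (intro sum.cong refl)
      fix y U assume "y \<in> {y\<in>Yn l n. \<kappa> y = v}"
      then have "?G y = ?G v" using Gk[of y] by simp
      then show "(if agr U y then 1 else 0) * ?G y * q y U = ?G v * (if agr U y then q y U else 0)"
        by simp
    qed
    have e1: "(\<Sum>y\<in>{y\<in>Yn l n. \<kappa> y = v}. \<Sum>U\<in>M. ?G v * (if agr U y then q y U else 0)) = ?G v * (\<Sum>U\<in>M. \<Sum>y\<in>{y\<in>Yn l n. \<kappa> y = v}. if agr U y then q y U else 0)"
      by (simp add: sum_distrib_left sum.swap[of _ M])
    have e2: "(\<Sum>U\<in>M. \<Sum>y\<in>{y\<in>Yn l n. \<kappa> y = v}. if agr U y then q y U else 0)
        = (\<Sum>U\<in>M. \<Sum>y\<in>Yv. if agr U y then q y U else 0)"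
    proof (rule sum.cong[OF refl])
      fix U assume U: "U \<in> M"
      show "(\<Sum>y\<in>{y\<in>Yn l n. \<kappa> y = v}. if agr U y then q y U else 0) = (\<Sum>y\<in>Yv. if agr U y then q y U else 0)"
      proof (rule sum.mono_neutral_right)
        show "finite {y\<in>Yn l n. \<kappa> y = v}" by simp
        show "Yv \<subseteq> {y\<in>Yn l n. \<kappa> y = v}" by (auto simp: Yv_def)
        show "\<forall>y\<in>{y\<in>Yn l n. \<kappa> y = v} - Yv. (if agr U y then q y U else 0) = 0"
        proof
          fix y assume y: "y \<in> {y\<in>Yn l n. \<kappa> y = v} - Yv"
          have "\<not> agr U y"
          proof
            assume a: "agr U y"
            have "\<forall>i\<in>S. y!i \<in> Some ` rowsL l"
            proof
              fix i assume i: "i \<in> S"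
              then have "i < n" using S by auto
              then have "X U ! i \<in> set (X U)" using XM[OF U] by auto
              then have "X U ! i \<in> rowsL l" using XM[OF U] by (auto simp: rowsL_def)
              then show "y!i \<in> Some ` rowsL l" using a i by (auto simp: agr_def)
            qed
            then show False using y by (auto simp: Yv_def)
          qed
          then show "(if agr U y then q y U else 0) = 0" by simp
        qed
      qed
    qed
    have e3: "(\<Sum>U\<in>M. \<Sum>y\<in>Yv. if agr U y then q y U else 0) \<le> card (mset ` Yv)"
    proof (rule orbit_bound[OF _ finM _ qms qsum])
      show "finite Yv" by (simp add: Yv_def)
      fix U y1 y2 assume U: "U \<in> M" and y: "y1 \<in> Yv" "y2 \<in> Yv" "agr U y1" "agr U y2"
      show "y1 = y2"
      proof (rule nth_equalityI)
        show "length y1 = length y2" using y by (simp add: Yv_def Yn_def)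
        fix i assume "i < length y1"
        then have i: "i < n" using y by (simp add: Yv_def Yn_def)
        show "y1 ! i = y2 ! i"
        proof (cases "i \<in> S")
          case True then show ?thesis using y by (simp add: agr_def)
        next
          case False
          have "\<kappa> y1 ! i = \<kappa> y2 ! i" using y by (simp add: Yv_def)
          then show ?thesis using False i by (simp add: \<kappa>nth)
        qed
      qed
    qed
    have e4: "real (card (mset ` Yv)) \<le> Bj"
    proof -
      define C where "C = image_mset (nth v) (mset_set ({..<n} - S))"
      define MS where "MS = multisets_of_size (Some ` rowsL l) (card S)"
      have sub: "mset ` Yv \<subseteq> (\<lambda>m. m + C) ` MS"
      proof
        fix m assume "m \<in> mset ` Yv"
        then obtain y where y: "y \<in> Yv" "m = mset y" by blast
        have len: "length y = n" using y by (simp add: Yv_def Yn_def)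
        have "image_mset (nth y) (mset_set ({..<n} - S)) = C"
        proof -
          have "\<And>i. i \<in> {..<n} - S \<Longrightarrow> y ! i = v ! i"
            using y \<kappa>nth by (auto simp: Yv_def)
          then show ?thesis unfolding C_def
            by (intro image_mset_cong) (simp add: finite_set_mset_mset_set)
        qed
        moreover have "image_mset (nth y) (mset_set S) \<in> MS"
          using y S finite_subset[OF S] by (auto simp: MS_def multisets_of_size_def Yv_def)
        ultimately show "m \<in> (\<lambda>m. m + C) ` MS"
          using mset_split[OF len S] y(2) by auto
      qed
      have finMS: "finite MS" unfolding MS_def by (rule finite_multisets_of_size) simp
      have "card (mset ` Yv) \<le> card ((\<lambda>m. m + C) ` MS)"
        by (rule card_mono[OF _ sub]) (simp add: finMS)
      also have "\<dots> \<le> card MS" by (rule card_image_le[OF finMS])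
      finally show ?thesis unfolding Bj_def MS_def by simp
    qed
    have gnn: "?G v \<ge> 0" using GS_nonneg[OF pe ps] .
    have "(\<Sum>U\<in>M. \<Sum>y\<in>Yv. if agr U y then q y U else 0) \<le> Bj" using e3 e4 by linarith
    from mult_left_mono[OF this gnn] show "(\<Sum>y\<in>{y\<in>Yn l n. \<kappa> y = v}. \<Sum>U\<in>M. (if agr U y then 1 else 0) * ?G y * q y U) \<le> ?G v * Bj"
      using e0 e1 e2 by simp
  qed
  also have "\<dots> = Bj * (\<Sum>v\<in>\<kappa> ` Yn l n. ?G v)" by (simp add: sum_distrib_left mult.commute)
  also have "(\<Sum>v\<in>\<kappa> ` Yn l n. ?G v) = (\<Sum>v\<in>Yn l n. (if \<forall>i\<in>S. v!i = None then 1 else 0) * ?G v)"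
    unfolding \<kappa>img by (simp add: sum.inter_filter, rule sum.cong, auto)
  also have "\<dots> = bconst pe ps l ^ (n - card S)"
    by (rule sum_pattern_GS[OF S]) (simp add: Aopt_def)
  finally show ?thesis unfolding agr_def Bj_def .
qed



lemma rowf_le: "pc \<ge> 0 \<Longrightarrow> pe \<ge> 0 \<Longrightarrow> ps \<ge> 0 \<Longrightarrow>
  rowf pc pe ps l x a \<le> (if a = Some x then pc else 0) + gf pe ps l a"
  using gf_nonneg[of pe ps l a] by (auto simp: rowf_def gf_def split: option.split)

lemma prod_rowf_le:
  assumes "pc \<ge> 0" "pe \<ge> 0" "ps \<ge> 0"
  shows "(\<Prod>i<n. rowf pc pe ps l (x!i) (y!i)) \<le>
    (\<Sum>S\<in>Pow {..<n}. pc ^ card S * ((if \<forall>i\<in>S. y!i = Some (x!i) then 1 else 0) * GS pe ps l S n y))"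
proof -
  have "(\<Prod>i<n. rowf pc pe ps l (x!i) (y!i)) \<le> (\<Prod>i<n. (if y!i = Some (x!i) then pc else 0) + gf pe ps l (y!i))"
    by (rule prod_mono) (use assms rowf_nonneg rowf_le in auto)
  also have "\<dots> = (\<Sum>S\<in>Pow {..<n}. (\<Prod>i\<in>S. if y!i = Some (x!i) then pc else 0) * (\<Prod>i\<in>{..<n} - S. gf pe ps l (y!i)))"
    by (rule prod_add) simp
  also have "\<dots> = (\<Sum>S\<in>Pow {..<n}. pc ^ card S * ((if \<forall>i\<in>S. y!i = Some (x!i) then 1 else 0) * GS pe ps l S n y))"
  proof (rule sum.cong[OF refl])
    fix S assume "S \<in> Pow {..<n}"
    then have "finite S" using finite_subset by auto
    then show "(\<Prod>i\<in>S. if y!i = Some (x!i) then pc else 0) * (\<Prod>i\<in>{..<n} - S. gf pe ps l (y!i))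
       = pc ^ card S * ((if \<forall>i\<in>S. y!i = Some (x!i) then 1 else 0) * GS pe ps l S n y)"
      by (simp add: prod_if_const GS_def)
  qed
  finally show ?thesis .
qed

lemma core:
  fixes q :: "bool list option list \<Rightarrow> 'u \<Rightarrow> real"
  assumes finM: "finite M"
    and XM: "\<And>U. U \<in> M \<Longrightarrow> length (X U) = n \<and> (\<forall>r\<in>set (X U). length r = l)"
    and qnn: "\<And>y U. q y U \<ge> 0"
    and qms: "\<And>y1 y2. mset y1 = mset y2 \<Longrightarrow> q y1 = q y2"
    and qsum: "\<And>y M'. M' \<subseteq> M \<Longrightarrow> (\<Sum>U\<in>M'. q y U) \<le> 1"
    and pc: "pc \<ge> 0" and pe: "pe \<ge> 0" and ps: "ps \<ge> 0"
  shows "(\<Sum>U\<in>M. \<Sum>y\<in>Yn l n. (\<Prod>i<n. rowf pc pe ps l (X U!i) (y!i)) * q y U)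
    \<le> (\<Sum>S\<in>Pow {..<n}. pc ^ card S * bconst pe ps l ^ (n - card S) *
          (if m < card S then real (card M) else real (card (multisets_of_size (Some ` rowsL l) (card S)))))"
proof -
  let ?A = "\<lambda>S U y. (if \<forall>i\<in>S. y!i = Some (X U!i) then 1 else 0) * GS pe ps l S n y"
  have "(\<Sum>U\<in>M. \<Sum>y\<in>Yn l n. (\<Prod>i<n. rowf pc pe ps l (X U!i) (y!i)) * q y U)
     \<le> (\<Sum>U\<in>M. \<Sum>y\<in>Yn l n. (\<Sum>S\<in>Pow {..<n}. pc ^ card S * ?A S U y) * q y U)"
    by (intro sum_mono mult_right_mono prod_rowf_le pc pe ps qnn)
  also have "\<dots> = (\<Sum>S\<in>Pow {..<n}. pc ^ card S * (\<Sum>U\<in>M. \<Sum>y\<in>Yn l n. ?A S U y * q y U))"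
    by (simp add: sum_distrib_left sum_distrib_right sum.swap[of _ "Pow {..<n}"] mult.assoc)
  also have "\<dots> \<le> (\<Sum>S\<in>Pow {..<n}. pc ^ card S * (bconst pe ps l ^ (n - card S) *
          (if m < card S then real (card M) else real (card (multisets_of_size (Some ` rowsL l) (card S))))))"
  proof (intro sum_mono mult_left_mono)
    fix S assume S: "S \<in> Pow {..<n}"
    show "0 \<le> pc ^ card S" using pc by simp
    show "(\<Sum>U\<in>M. \<Sum>y\<in>Yn l n. ?A S U y * q y U) \<le> bconst pe ps l ^ (n - card S) *
          (if m < card S then real (card M) else real (card (multisets_of_size (Some ` rowsL l) (card S))))"
    proof (cases "m < card S")
      case True
      have "(\<Sum>U\<in>M. \<Sum>y\<in>Yn l n. ?A S U y * q y U) \<le> (\<Sum>U\<in>M. \<Sum>y\<in>Yn l n. ?A S U y)"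
      proof (intro sum_mono)
        fix U y assume UM: "U \<in> M" and "y \<in> Yn l n"
        have "?A S U y \<ge> 0" using GS_nonneg[OF pe ps] by simp
        moreover have "q y U \<le> 1" using qsum[of "{U}" y] UM by auto
        ultimately show "?A S U y * q y U \<le> ?A S U y" using qnn[of y U] by (simp add: mult_left_le)
      qed
      also have "\<dots> = (\<Sum>U\<in>M. bconst pe ps l ^ (n - card S))"
      proof (rule sum.cong[OF refl])
        fix U assume U: "U \<in> M"
        show "(\<Sum>y\<in>Yn l n. ?A S U y) = bconst pe ps l ^ (n - card S)"
        proof (rule sum_pattern_GS)
          show "S \<subseteq> {..<n}" using S by auto
          fix i assume "i \<in> S"
          then have "i < n" using S by auto
          then have "X U ! i \<in> set (X U)" using XM[OF U] by auto
          then show "Some (X U ! i) \<in> Aopt l" using XM[OF U] by (auto simp: Aopt_def rowsL_def)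
        qed
      qed
      finally show ?thesis using True by (simp add: mult.commute)
    next
      case False
      have "(\<Sum>U\<in>M. \<Sum>y\<in>Yn l n. ?A S U y * q y U) \<le> real (card (multisets_of_size (Some ` rowsL l) (card S))) * bconst pe ps l ^ (n - card S)"
        by (rule main_part[OF _ finM XM qnn qms qsum pe ps]) (use S in auto)
      then show ?thesis using False by (simp add: mult.commute)
    qed
  qed
  finally show ?thesis by (simp add: mult.assoc)
qed



lemma binom_sum_Pow:
  fixes a b :: real
  shows "(\<Sum>S\<in>Pow {..<n}. a ^ card S * b ^ (n - card S)) = (a + b) ^ n"
proof -
  have "(a + b) ^ n = (\<Prod>i<n. a + b)" by simp
  also have "\<dots> = (\<Sum>S\<in>Pow {..<n}. (\<Prod>i\<in>S. a) * (\<Prod>i\<in>{..<n} - S. b))"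
    by (rule prod_add) simp
  also have "\<dots> = (\<Sum>S\<in>Pow {..<n}. a ^ card S * b ^ (n - card S))"
  proof (rule sum.cong[OF refl])
    fix S assume "S \<in> Pow {..<n}"
    then have "S \<subseteq> {..<n}" "finite S" using finite_subset by auto
    then show "(\<Prod>i\<in>S. a) * (\<Prod>i\<in>{..<n} - S. b) = a ^ card S * b ^ (n - card S)"
      by (simp add: card_Diff_subset)
  qed
  finally show ?thesis by simp
qed

lemma card_ms: "card (multisets_of_size (Some ` rowsL l) j) = (2 ^ l + j - 1) choose j"
proof -
  have "card (Some ` rowsL l) = 2 ^ l" by (simp add: card_image card_rows)
  then show ?thesis by (simp add: card_multisets_of_size)
qed

lemma card_ms_mono: "j \<le> m \<Longrightarrow> card (multisets_of_size (Some ` rowsL l) j) \<le> (2 ^ l + m - 1) choose m"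
proof -
  assume jm: "j \<le> m"
  define K :: nat where "K = 2 ^ l"
  have K1: "K \<ge> 1" by (simp add: K_def)
  have "(K + j - 1) choose j = (K + j - 1) choose (K - 1)"
    using K1 by (subst binomial_symmetric) (auto simp: algebra_simps)
  also have "\<dots> \<le> (K + m - 1) choose (K - 1)" by (rule binomial_right_mono) (use jm in simp)
  also have "\<dots> = (K + m - 1) choose m"
    using K1 by (subst binomial_symmetric) (auto simp: algebra_simps)
  finally show ?thesis by (simp add: card_ms K_def)
qed

lemma bconst_nonneg: "pe \<ge> 0 \<Longrightarrow> ps \<ge> 0 \<Longrightarrow> bconst pe ps l \<ge> 0"
proof -
  assume "pe \<ge> 0" "ps \<ge> 0"
  moreover have "(2::real) ^ l \<ge> 1" by simp
  ultimately show ?thesis by (simp add: bconst_def)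
qed

lemma sum_bound:
  fixes t N :: real
  assumes t: "t \<ge> 1" and pc: "pc \<ge> 0" and b: "b \<ge> 0" and N: "N \<ge> 0"
  shows "(\<Sum>S\<in>Pow {..<n}. pc ^ card S * b ^ (n - card S) *
          (if m < card S then N else real (card (multisets_of_size (Some ` rowsL l) (card S)))))
    \<le> N * (pc * t + b) ^ n / t ^ m + real ((2 ^ l + m - 1) choose m) * (pc + b) ^ n"
proof -
  let ?B = "real ((2 ^ l + m - 1) choose m)"
  have "(\<Sum>S\<in>Pow {..<n}. pc ^ card S * b ^ (n - card S) *
          (if m < card S then N else real (card (multisets_of_size (Some ` rowsL l) (card S)))))
     \<le> (\<Sum>S\<in>Pow {..<n}. pc ^ card S * b ^ (n - card S) * (N / t ^ m * t ^ card S + ?B))"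
  proof (intro sum_mono mult_left_mono)
    fix S assume "S \<in> Pow {..<n}"
    show "0 \<le> pc ^ card S * b ^ (n - card S)" using pc b by simp
    have tp: "t ^ m > 0" using t by simp
    show "(if m < card S then N else real (card (multisets_of_size (Some ` rowsL l) (card S)))) \<le> N / t ^ m * t ^ card S + ?B"
    proof (cases "m < card S")
      case True
      have "t ^ m \<le> t ^ card S" using t True by (intro power_increasing) auto
      then have "1 \<le> t ^ card S / t ^ m" using tp by simp
      then have "N \<le> N * (t ^ card S / t ^ m)" using N by (metis mult_left_mono mult.right_neutral)
      then show ?thesis using True by simp
    next
      case False
      have "real (card (multisets_of_size (Some ` rowsL l) (card S))) \<le> ?B"
        using card_ms_mono[of "card S" m l] False by simp
      moreover have "N / t ^ m * t ^ card S \<ge> 0" using N t by simp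
      ultimately show ?thesis using False by simp
    qed
  qed
  also have "\<dots> = N / t ^ m * (\<Sum>S\<in>Pow {..<n}. (pc * t) ^ card S * b ^ (n - card S))
      + ?B * (\<Sum>S\<in>Pow {..<n}. pc ^ card S * b ^ (n - card S))"
    by (simp add: sum.distrib sum_distrib_left algebra_simps power_mult_distrib)
  also have "\<dots> = N * (pc * t + b) ^ n / t ^ m + ?B * (pc + b) ^ n"
    by (simp add: binom_sum_Pow)
  finally show ?thesis .
qed

lemma bin_mats_lists: "bin_mats k w = {M. set M \<subseteq> rowsL w \<and> length M = k}"
  by (auto simp: bin_mats_def rowsL_def)

lemma finite_bin_mats: "finite (bin_mats k w)" and card_bin_mats: "card (bin_mats k w) = 2 ^ (k * w)"
  unfolding bin_mats_lists
  using finite_lists_length_eq[of "rowsL w" k] card_lists_length_eq[of "rowsL w" k]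
  by (auto simp: card_rows mult.commute simp flip: power_mult)

lemma prob_neq: "measure_pmf.prob P {z. dec z \<noteq> U} = 1 - measure_pmf.prob P {z. dec z = U}"
proof -
  have "{z. dec z \<noteq> U} = space (measure_pmf P) - {z. dec z = U}" by auto
  then show ?thesis using measure_pmf.prob_compl[of "{z. dec z = U}" P] by simp
qed

lemma finite_bound:
  assumes code: "is_code n l k w enc" and l: "l \<ge> 1" and t: "t \<ge> 1"
    and pc: "pc \<ge> 0" and pe: "pe \<ge> 0" and ps: "ps \<ge> 0" and sum1: "pc + pe + ps = 1"
  shows "1 - err_prob pc pe ps l k w enc dec \<le>
    (pc * t + bconst pe ps l) ^ n / t ^ m + real ((2 ^ l + m - 1) choose m) * (pc + bconst pe ps l) ^ n / 2 ^ (k * w)"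
proof -
  define M where "M = bin_mats k w"
  define q where "q y U = measure_pmf.prob (chan2 y) {z. dec z = U}" for y U
  define N where "N = real (card M)"
  have N: "N = 2 ^ (k * w)" by (simp add: N_def M_def card_bin_mats)
  have Npos: "N > 0" by (simp add: N)
  have finM: "finite M" by (simp add: M_def finite_bin_mats)
  have XM: "\<And>U. U \<in> M \<Longrightarrow> length (enc U) = n \<and> (\<forall>r\<in>set (enc U). length r = l)"
    using code by (auto simp: is_code_def M_def bin_mats_def)
  have qnn: "\<And>y U. q y U \<ge> 0" by (simp add: q_def)
  have qms: "\<And>y1 y2. mset y1 = mset y2 \<Longrightarrow> q y1 = q y2"
    unfolding q_def using chan2_mset by metis
  have qsum: "\<And>y M'. M' \<subseteq> M \<Longrightarrow> (\<Sum>U\<in>M'. q y U) \<le> 1"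
    unfolding q_def by (rule sum_prob_dec_le1) (use finM finite_subset in blast)
  have c: "\<And>U. U \<in> M \<Longrightarrow> measure_pmf.prob (outer_chan pc pe ps l (enc U)) {z. dec z = U}
      = (\<Sum>y\<in>Yn l n. (\<Prod>i<n. rowf pc pe ps l (enc U!i) (y!i)) * q y U)"
  proof -
    fix U assume U: "U \<in> M"
    show "?thesis U"
      using prob_outer[of "enc U" l pc pe ps "{z. dec z = U}"] XM[OF U] l pc pe ps sum1
      by (simp add: q_def)
  qed
  have "err_prob pc pe ps l k w enc dec = (\<Sum>U\<in>M. 1 - measure_pmf.prob (outer_chan pc pe ps l (enc U)) {z. dec z = U}) / N"
    unfolding err_prob_def M_def N_def by (simp add: prob_neq)
  also have "\<dots> = 1 - (\<Sum>U\<in>M. \<Sum>y\<in>Yn l n. (\<Prod>i<n. rowf pc pe ps l (enc U!i) (y!i)) * q y U) / N"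
    using Npos by (simp add: sum_subtractf c N_def field_simps)
  finally have err: "1 - err_prob pc pe ps l k w enc dec = (\<Sum>U\<in>M. \<Sum>y\<in>Yn l n. (\<Prod>i<n. rowf pc pe ps l (enc U!i) (y!i)) * q y U) / N"
    by simp
  have "(\<Sum>U\<in>M. \<Sum>y\<in>Yn l n. (\<Prod>i<n. rowf pc pe ps l (enc U!i) (y!i)) * q y U)
     \<le> (\<Sum>S\<in>Pow {..<n}. pc ^ card S * bconst pe ps l ^ (n - card S) *
          (if m < card S then N else real (card (multisets_of_size (Some ` rowsL l) (card S)))))"
    unfolding N_def by (rule core[OF finM XM qnn qms qsum pc pe ps])
  also have "\<dots> \<le> N * (pc * t + bconst pe ps l) ^ n / t ^ m + real ((2 ^ l + m - 1) choose m) * (pc + bconst pe ps l) ^ n"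
    by (rule sum_bound[OF t pc bconst_nonneg[OF pe ps]]) (use Npos in simp)
  finally have "1 - err_prob pc pe ps l k w enc dec \<le> (N * (pc * t + bconst pe ps l) ^ n / t ^ m + real ((2 ^ l + m - 1) choose m) * (pc + bconst pe ps l) ^ n) / N"
    unfolding err using Npos by (simp add: divide_right_mono)
  also have "\<dots> = (pc * t + bconst pe ps l) ^ n / t ^ m + real ((2 ^ l + m - 1) choose m) * (pc + bconst pe ps l) ^ n / 2 ^ (k * w)"
    using Npos by (simp add: add_divide_distrib N)
  finally show ?thesis .
qed



lemma exists_t:
  fixes pc q :: real
  assumes "pc \<ge> 0" "pc < q"
  shows "\<exists>t>1. pc * t + 1 - pc < t powr q"
proof -
  define f where "f x = x powr q - pc * x" for x :: real
  have "((\<lambda>x. x powr q) has_real_derivative q * 1 powr (q - 1)) (at 1)"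
    by (rule has_real_derivative_powr) simp
  then have "(f has_real_derivative (q - pc)) (at 1)"
    unfolding f_def by (auto intro!: derivative_eq_intros)
  then obtain d where d: "d > 0" "\<And>h. h > 0 \<Longrightarrow> h < d \<Longrightarrow> f 1 < f (1 + h)"
    using DERIV_pos_inc_right[of f "q - pc" 1] assms by auto
  have "f 1 < f (1 + d / 2)" using d by auto
  then have "pc * (1 + d/2) + 1 - pc < (1 + d/2) powr q" by (simp add: f_def)
  moreover have "1 + d/2 > 1" using d by simp
  ultimately show ?thesis by blast
qed

lemma pow_le_exp_fact: "real m ^ m \<le> exp (real m) * fact m"
proof -
  let ?f = "\<lambda>n. real m ^ n /\<^sub>R fact n"
  have s: "?f sums exp (real m)" by (rule exp_converges)
  have "sum ?f {m} \<le> suminf ?f"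
    by (rule sum_le_suminf) (use s sums_summable in auto)
  then have "real m ^ m / fact m \<le> exp (real m)" using sums_unique[OF s] by (simp add: divide_inverse mult.commute)
  then show ?thesis by (simp add: divide_le_eq mult.commute)
qed

lemma choose_le_real: "real (a choose m) \<le> real a ^ m / fact m"
proof -
  have "(a choose m) * fact m \<le> a ^ m" by (rule binomial_fact_pow)
  then have "real (a choose m) * fact m \<le> real a ^ m"
    by (metis of_nat_fact of_nat_le_iff of_nat_mult of_nat_power)
  then show ?thesis by (simp add: le_divide_eq)
qed

lemma per_n_bound:
  fixes q :: real and n l k w m :: nat
  assumes pow: "2 ^ (k * w) \<le> 4 * real ((2 ^ l + m - 1) choose m)"
    and m1: "m \<ge> 1" and mK: "m \<le> 2 ^ l" and l1: "l \<ge> 1" and n1: "n \<ge> 1"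
    and q: "q > 0" and mq: "real m \<ge> q * n / 2"
  shows "real (k * w) / real (n * l) \<le>
     2 / (real n * real l) + (real m / real n) * (1 + (1 + 1 / ln 2 - ln (q / 2) / ln 2) / real l - log 2 (real n) / real l)"
proof -
  define K :: real where "K = 2 ^ l"
  have Kpos: "K > 0" by (simp add: K_def)
  have mpos: "real m > 0" using m1 by simp
  have "real ((2 ^ l + m - 1) choose m) \<le> real (2 ^ l + m - 1) ^ m / fact m" by (rule choose_le_real)
  also have "\<dots> \<le> (2 * K) ^ m / fact m"
  proof (rule divide_right_mono[OF power_mono])
    have "real m \<le> 2 ^ l" using mK by (metis of_nat_le_iff of_nat_numeral of_nat_power)
    moreover have "real (2 ^ l + m - 1) = 2 ^ l + real m - 1" using m1 by (simp add: of_nat_diff)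
    moreover have "(1::real) \<le> 2 ^ l" by simp
    ultimately show "real (2 ^ l + m - 1) \<le> 2 * K" unfolding K_def by linarith
  qed simp_all
  also have "\<dots> \<le> (2 * K) ^ m * exp (real m) / real m ^ m"
  proof -
    have "real m ^ m \<le> exp (real m) * fact m" by (rule pow_le_exp_fact)
    then have "1 / fact m \<le> exp (real m) / real m ^ m"
      using mpos by (simp add: field_simps)
    then have "(2 * K) ^ m * (1 / fact m) \<le> (2 * K) ^ m * (exp (real m) / real m ^ m)"
      using Kpos by (intro mult_left_mono) simp_all
    then show ?thesis by simp
  qed
  finally have "(2::real) ^ (k * w) \<le> 4 * ((2 * K) ^ m * exp (real m) / real m ^ m)"
    using pow by linarith
  then have "ln ((2::real) ^ (k * w)) \<le> ln (4 * ((2 * K) ^ m * exp (real m) / real m ^ m))"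
    using Kpos mpos by (subst ln_le_cancel_iff) auto
  then have "real (k * w) * ln 2 \<le> ln 4 + (real m * ln (2 * K) + real m - real m * ln (real m))"
    using Kpos mpos by (simp add: ln_mult ln_div ln_realpow algebra_simps)
  moreover have "ln (2 * K) = (real l + 1) * ln 2" unfolding K_def
    by (simp add: ln_mult ln_realpow algebra_simps)
  moreover have "ln (4::real) = 2 * ln 2"
    using ln_realpow[of 2 2] by simp
  ultimately have kw: "real (k * w) * ln 2 \<le> 2 * ln 2 + real m * ((real l + 1) * ln 2 + 1 - ln (real m))"
    by (simp add: algebra_simps)
  have lnm: "ln (real m) \<ge> ln (real n) + ln (q / 2)"
  proof -
    have "ln (real m) \<ge> ln (q * n / 2)" using mq q n1 m1 by (subst ln_le_cancel_iff) auto
    also have "ln (q * n / 2) = ln (real n) + ln (q / 2)" using q n1 by (simp add: ln_mult ln_div)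
    finally show ?thesis .
  qed
  have ln2: "ln (2::real) > 0" by simp
  have "real (k * w) \<le> (2 * ln 2 + real m * ((real l + 1) * ln 2 + 1 - ln (real m))) / ln 2"
    using kw ln2 by (simp add: le_divide_eq)
  also have "\<dots> = 2 + real m * ((real l + 1) + 1 / ln 2 - ln (real m) / ln 2)"
    using ln2 by (simp add: field_simps)
  also have "\<dots> \<le> 2 + real m * ((real l + 1) + 1 / ln 2 - (ln (real n) + ln (q / 2)) / ln 2)"
    using lnm ln2 mpos by (intro add_left_mono mult_left_mono) (simp_all add: divide_right_mono)
  also have "\<dots> = 2 + real m * real l * (1 + (1 + 1 / ln 2 - ln (q / 2) / ln 2) / real l - log 2 (real n) / real l)"
    using l1 by (simp add: log_def field_simps)
  finally have A: "real (k * w) \<le> 2 + real m * real l * (1 + (1 + 1 / ln 2 - ln (q / 2) / ln 2) / real l - log 2 (real n) / real l)" .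
  have pos: "real n * real l > 0" using n1 l1 by simp
  define X where "X = (1 + (1 + 1 / ln 2 - ln (q / 2) / ln 2) / real l - log 2 (real n) / real l)"
  have A': "real (k * w) \<le> 2 + real m * real l * X" using A unfolding X_def .
  have "real (k * w) / real (n * l) \<le> (2 + real m * real l * X) / (real n * real l)"
    using divide_right_mono[OF A', of "real n * real l"] pos by simp
  also have "\<dots> = 2 / (real n * real l) + (real m / real n) * X"
    using pos l1 by (simp add: add_divide_distrib)
  finally show ?thesis unfolding X_def .
qed



lemma log2_at_top: "filterlim (\<lambda>n::nat. log 2 (real n)) at_top sequentially"
  by real_asymp

lemma one_plus_pow_le_exp: "x \<ge> 0 \<Longrightarrow> (1 + x) ^ n \<le> exp (real n * x)"
proof -
  assume x: "x \<ge> 0"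
  have "(1 + x) ^ n \<le> exp x ^ n" by (rule power_mono) (use x exp_ge_add_one_self in auto)
  also have "\<dots> = exp (real n * x)" by (simp add: exp_of_nat_mult)
  finally show ?thesis .
qed

lemma powr_pow_mult: "t > 0 \<Longrightarrow> (t powr q) ^ n = t powr (q * real n)"
  by (simp add: powr_realpow[symmetric] powr_powr)


theorem lemma2:
  fixes beta delta pc pe ps R :: real
  assumes "beta > 1" and "delta > 0"
    and "pc \<ge> 0" and "pe \<ge> 0" and "ps \<ge> 0" and "pc + pe + ps = 1"
    and "achievable_rate pc pe ps beta R"
  shows "R \<le> (pc + delta) * (1 - 1 / beta)"
proof -
  note beta = assms(1) and delta = assms(2) and pc = assms(3) and pe = assms(4) and ps = assms(5)
    and sum1 = assms(6)
  obtain l k w enc dec where code: "\<And>n. is_code n (l n) (k n) (w n) (enc n)"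
    and lim_l: "(\<lambda>n. real (l n) / log 2 (real n)) \<longlonglongrightarrow> beta"
    and lim_R: "(\<lambda>n. real (k n * w n) / real (n * l n)) \<longlonglongrightarrow> R"
    and lim_e: "(\<lambda>n. err_prob pc pe ps (l n) (k n) (w n) (enc n) (dec n)) \<longlonglongrightarrow> 0"
    using assms(7) unfolding achievable_rate_def by blast
  define q where "q = pc + delta / 2"
  have q0: "q > 0" and pcq: "pc < q" using pc delta by (auto simp: q_def)
  define m where "m n = nat \<lfloor>q * real n\<rfloor>" for n :: nat
  define b' where "b' = (1 + beta) / 2"
  have b'1: "b' > 1" and b'b: "b' < beta" using beta by (auto simp: b'_def)
  obtain t where t1: "t > 1" and tq: "pc * t + 1 - pc < t powr q" using exists_t[OF pc pcq] by blast
  define r where "r = (pc * t + 1 - pc) / t powr q"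
  have a1: "pc * t + 1 - pc \<ge> 1" using mult_left_mono[of 1 t pc] pc t1 by simp
  have tqpos: "t powr q > 0" using t1 by simp
  have r0: "r > 0" and r1: "r < 1" using a1 tq tqpos by (auto simp: r_def)
  define eps where "eps n = ps / (2 ^ l n - 1)" for n :: nat
  define E where "E n = (1 + eps n) ^ n" for n :: nat
  have ev_l: "eventually (\<lambda>n. real (l n) > b' * log 2 (real n) \<and> log 2 (real n) \<ge> 1) sequentially"
  proof -
    have "eventually (\<lambda>n. real (l n) / log 2 (real n) > b') sequentially"
      using order_tendstoD(1)[OF lim_l b'b] .
    moreover have "eventually (\<lambda>n::nat. log 2 (real n) \<ge> 1) sequentially"
      using filterlim_at_top[THEN iffD1, OF log2_at_top] by blast
    ultimately show ?thesis
    proof (rule eventually_elim2)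
      fix n assume a: "real (l n) / log 2 (real n) > b'" and "log 2 (real n) \<ge> 1"
      then show "real (l n) > b' * log 2 (real n) \<and> log 2 (real n) \<ge> 1"
        by (simp add: pos_less_divide_eq mult.commute)
    qed
  qed
  have l_top: "filterlim (\<lambda>n. real (l n)) at_top sequentially"
  proof (rule filterlim_at_top_mono[OF _ ev_l[THEN eventually_mono]])
    show "filterlim (\<lambda>n. b' * log 2 (real n)) at_top sequentially"
      using b'1 by (intro filterlim_tendsto_pos_mult_at_top[OF tendsto_const _ log2_at_top]) simp
  qed auto
  have l_ge1: "eventually (\<lambda>n. l n \<ge> 1) sequentially"
    using ev_l
  proof (rule eventually_mono)
    fix n assume a: "real (l n) > b' * log 2 (real n) \<and> log 2 (real n) \<ge> 1"
    then have "b' * log 2 (real n) \<ge> 1 * 1" using b'1 by (intro mult_mono) auto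
    then show "l n \<ge> 1" using a by linarith
  qed
  have L1: "(\<lambda>n. real n / 2 ^ l n) \<longlonglongrightarrow> 0"
  proof (rule tendsto_sandwich[OF _ _ tendsto_const])
    show "eventually (\<lambda>n. 0 \<le> real n / 2 ^ l n) sequentially" by simp
    show "(\<lambda>n. real n powr (1 - b')) \<longlonglongrightarrow> 0"
      by (rule tendsto_neg_powr[OF _ filterlim_real_sequentially]) (use b'1 in simp)
    show "eventually (\<lambda>n. real n / 2 ^ l n \<le> real n powr (1 - b')) sequentially"
      using ev_l
    proof (rule eventually_mono)
      fix n assume a: "real (l n) > b' * log 2 (real n) \<and> log 2 (real n) \<ge> 1"
      then have npos: "real n > 0" by (cases "n = 0") (auto simp: log_def)
      have "2 powr (b' * log 2 (real n)) = (2 powr log 2 (real n)) powr b'"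
        by (simp add: powr_powr mult.commute)
      then have "real n powr b' = 2 powr (b' * log 2 (real n))" using npos by simp
      also have "\<dots> \<le> 2 powr real (l n)" using a by (intro powr_mono) auto
      also have "\<dots> = 2 ^ l n" by (simp add: powr_realpow)
      finally have le: "real n powr b' \<le> 2 ^ l n" .
      have "real n / 2 ^ l n \<le> real n / real n powr b'"
        using le npos by (intro divide_left_mono) auto
      also have "\<dots> = real n powr (1 - b')" using npos by (simp add: powr_diff)
      finally show "real n / 2 ^ l n \<le> real n powr (1 - b')" .
    qed
  qed
  have eps0: "\<And>n. eps n \<ge> 0"
  proof -
    fix n have "(2::real) ^ l n \<ge> 1" by simp
    then show "eps n \<ge> 0" using ps by (simp add: eps_def)
  qed
  have L2: "(\<lambda>n. real n * eps n) \<longlonglongrightarrow> 0"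
  proof (rule tendsto_sandwich[OF _ _ tendsto_const])
    show "eventually (\<lambda>n. 0 \<le> real n * eps n) sequentially" using eps0 by simp
    show "(\<lambda>n. 2 * ps * (real n / 2 ^ l n)) \<longlonglongrightarrow> 0"
      using tendsto_mult[OF tendsto_const L1, of "2 * ps"] by simp
    show "eventually (\<lambda>n. real n * eps n \<le> 2 * ps * (real n / 2 ^ l n)) sequentially"
      using l_ge1
    proof (rule eventually_mono)
      fix n assume ln: "l n \<ge> 1"
      have p2: "(2::real) ^ l n \<ge> 2" using ln by (metis power_one_right power_increasing one_le_numeral)
      have "eps n \<le> 2 * ps / 2 ^ l n"
        unfolding eps_def using p2 ps by (simp add: divide_simps) (simp add: algebra_simps mult_left_mono)
      then have "real n * eps n \<le> real n * (2 * ps / 2 ^ l n)" by (rule mult_left_mono) simp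
      then show "real n * eps n \<le> 2 * ps * (real n / 2 ^ l n)" by (simp add: mult.commute mult.left_commute)
    qed
  qed
  have E2: "eventually (\<lambda>n. E n \<le> 2) sequentially"
  proof -
    have "(\<lambda>n. exp (real n * eps n)) \<longlonglongrightarrow> exp 0" by (intro tendsto_intros L2)
    then have "eventually (\<lambda>n. exp (real n * eps n) < 2) sequentially"
      by (intro order_tendstoD(2)) auto
    then show ?thesis
    proof (rule eventually_mono)
      fix n assume "exp (real n * eps n) < 2"
      moreover have "E n \<le> exp (real n * eps n)" unfolding E_def by (rule one_plus_pow_le_exp[OF eps0])
      ultimately show "E n \<le> 2" by simp
    qed
  qed
  have bc: "\<And>n. l n \<ge> 1 \<Longrightarrow> bconst pe ps (l n) = 1 - pc + eps n"
  proof -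
    fix n assume ln: "l n \<ge> 1"
    have p2: "(2::real) ^ l n \<ge> 2" using ln by (metis power_one_right power_increasing one_le_numeral)
    have "2 ^ l n * (ps / (2 ^ l n - 1)) = ps + ps / (2 ^ l n - 1)"
      using p2 by (simp add: field_simps)
    then show "bconst pe ps (l n) = 1 - pc + eps n" using sum1 by (simp add: bconst_def eps_def)
  qed
  have mfl: "\<And>n. real (m n) > q * real n - 1 \<and> real (m n) \<le> q * real n"
  proof -
    fix n
    have "q * real n \<ge> 0" using q0 by simp
    then have "real (m n) = of_int \<lfloor>q * real n\<rfloor>" by (simp add: m_def)
    then show "real (m n) > q * real n - 1 \<and> real (m n) \<le> q * real n" by linarith
  qed
  have Abound: "\<And>n. l n \<ge> 1 \<Longrightarrow> (pc * t + bconst pe ps (l n)) ^ n / t ^ m n \<le> t * r ^ n * E n"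
  proof -
    fix n assume ln: "l n \<ge> 1"
    have "pc * t + bconst pe ps (l n) = (pc * t + 1 - pc) + eps n" using bc[OF ln] by simp
    also have "\<dots> \<le> (pc * t + 1 - pc) * (1 + eps n)"
      using mult_right_mono[OF a1 eps0[of n]] by (simp add: algebra_simps)
    finally have "(pc * t + bconst pe ps (l n)) ^ n \<le> ((pc * t + 1 - pc) * (1 + eps n)) ^ n"
      by (rule power_mono) (use a1 eps0[of n] bc[OF ln] pc t1 in \<open>simp add: add_nonneg_nonneg\<close>)
    also have "\<dots> = (pc * t + 1 - pc) ^ n * E n" by (simp add: E_def power_mult_distrib)
    finally have num: "(pc * t + bconst pe ps (l n)) ^ n \<le> (pc * t + 1 - pc) ^ n * E n" .
    have "t powr (q * real n - 1) \<le> t powr real (m n)" using mfl[of n] t1 by (intro powr_mono) auto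
    also have "\<dots> = t ^ m n" using t1 by (simp add: powr_realpow)
    finally have den: "t powr (q * real n - 1) \<le> t ^ m n" .
    have dpos: "t powr (q * real n - 1) > 0" using t1 by simp
    have Enn: "E n \<ge> 0" unfolding E_def using eps0[of n] by simp
    have "(pc * t + bconst pe ps (l n)) ^ n / t ^ m n \<le> (pc * t + 1 - pc) ^ n * E n / t ^ m n"
      using num t1 by (intro divide_right_mono) auto
    also have "\<dots> \<le> (pc * t + 1 - pc) ^ n * E n / t powr (q * real n - 1)"
      using den dpos a1 Enn t1 by (intro divide_left_mono mult_nonneg_nonneg mult_pos_pos) auto
    also have "t powr (q * real n - 1) = (t powr q) ^ n / t"
      using t1 by (simp add: powr_diff powr_pow_mult mult.commute)
    also have "(pc * t + 1 - pc) ^ n * E n / ((t powr q) ^ n / t) = t * r ^ n * E n"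
      using tqpos t1 by (simp add: r_def power_divide field_simps)
    finally show "(pc * t + bconst pe ps (l n)) ^ n / t ^ m n \<le> t * r ^ n * E n" .
  qed
  define C where "C = 1 + 1 / ln 2 - ln (q / 2) / ln 2"
  define RHS where "RHS n = 2 / (real n * real (l n)) + (real (m n) / real n) *
      (1 + C / real (l n) - log 2 (real n) / real (l n))" for n
  have A4: "eventually (\<lambda>n. 2 * t * r ^ n < 1/4) sequentially"
  proof -
    have "(\<lambda>n. 2 * t * r ^ n) \<longlonglongrightarrow> 2 * t * 0"
      by (intro tendsto_intros LIMSEQ_power_zero) (use r0 r1 in simp)
    then show ?thesis by (intro order_tendstoD(2)) auto
  qed
  have err4: "eventually (\<lambda>n. err_prob pc pe ps (l n) (k n) (w n) (enc n) (dec n) < 1/4) sequentially"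
    using order_tendstoD(2)[OF lim_e, of "1/4"] by simp
  have qn2: "eventually (\<lambda>n. q * real n \<ge> 2) sequentially"
  proof -
    have "eventually (\<lambda>n. n \<ge> nat \<lceil>2 / q\<rceil>) sequentially" by (rule eventually_ge_at_top)
    then show ?thesis
    proof (rule eventually_mono)
      fix n assume "n \<ge> nat \<lceil>2 / q\<rceil>"
      then have "real n \<ge> 2 / q" by linarith
      then show "q * real n \<ge> 2" using q0 by (simp add: field_simps)
    qed
  qed
  have mK: "eventually (\<lambda>n. q * real n \<le> 2 ^ l n) sequentially"
  proof -
    have "(\<lambda>n. q * (real n / 2 ^ l n)) \<longlonglongrightarrow> q * 0" by (intro tendsto_intros L1)
    then have "eventually (\<lambda>n. q * (real n / 2 ^ l n) < 1) sequentially"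
      by (intro order_tendstoD(2)) auto
    then show ?thesis
      by (rule eventually_mono) (simp add: field_simps)
  qed
  have ev_main: "eventually (\<lambda>n. real (k n * w n) / real (n * l n) \<le> RHS n) sequentially"
    using l_ge1 E2 A4 err4 qn2 mK eventually_ge_at_top[of 1]
  proof (eventually_elim)
    case (elim n)
    note ln = elim(1) and En = elim(2) and Arn = elim(3) and er = elim(4) and qn = elim(5)
      and qK = elim(6) and n1 = elim(7)
    define B where "B = real ((2 ^ l n + m n - 1) choose m n)"
    have fb: "1 - err_prob pc pe ps (l n) (k n) (w n) (enc n) (dec n) \<le>
      (pc * t + bconst pe ps (l n)) ^ n / t ^ m n + B * (pc + bconst pe ps (l n)) ^ n / 2 ^ (k n * w n)"
      unfolding B_def by (rule finite_bound[OF code ln _ pc pe ps sum1]) (use t1 in simp)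
    have pE: "(pc + bconst pe ps (l n)) ^ n = E n" using bc[OF ln] by (simp add: E_def)
    have A14: "(pc * t + bconst pe ps (l n)) ^ n / t ^ m n \<le> 1/4"
    proof -
      have "t * r ^ n * E n \<le> t * r ^ n * 2"
        using En t1 r0 by (intro mult_left_mono) auto
      then show ?thesis using Abound[OF ln] Arn by linarith
    qed
    have fb': "1 - err_prob pc pe ps (l n) (k n) (w n) (enc n) (dec n) \<le>
      (pc * t + bconst pe ps (l n)) ^ n / t ^ m n + B * E n / 2 ^ (k n * w n)" using fb pE by simp
    have "1/2 \<le> B * E n / 2 ^ (k n * w n)" using fb' A14 er by linarith
    also have "\<dots> \<le> B * 2 / 2 ^ (k n * w n)"
      using En by (intro divide_right_mono mult_left_mono) (auto simp: B_def)
    finally have pow: "2 ^ (k n * w n) \<le> 4 * B" by (simp add: field_simps)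
    have m1: "m n \<ge> 1" using mfl[of n] qn by linarith
    have mq: "real (m n) \<ge> q * real n / 2" using mfl[of n] qn by linarith
    have mK': "m n \<le> 2 ^ l n"
    proof -
      have "real (m n) \<le> 2 ^ l n" using mfl[of n] qK by linarith
      then show ?thesis by (metis of_nat_le_iff of_nat_numeral of_nat_power)
    qed
    show ?case unfolding RHS_def C_def
      by (rule per_n_bound[OF pow[unfolded B_def] m1 mK' ln n1 q0 mq])
  qed
  have inv_l: "(\<lambda>n. 1 / real (l n)) \<longlonglongrightarrow> 0"
    using tendsto_inverse_0_at_top[OF l_top] by (simp add: inverse_eq_divide)
  have lim_log: "(\<lambda>n. log 2 (real n) / real (l n)) \<longlonglongrightarrow> 1 / beta"
  proof -
    have "(\<lambda>n. inverse (real (l n) / log 2 (real n))) \<longlonglongrightarrow> inverse beta"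
      by (rule tendsto_inverse[OF lim_l]) (use beta in simp)
    then show ?thesis by (simp add: inverse_eq_divide)
  qed
  have lim_m: "(\<lambda>n. real (m n) / real n) \<longlonglongrightarrow> q"
  proof (rule tendsto_sandwich[of "\<lambda>n. q - 1 / real n" _ _ "\<lambda>n. q"])
    show "eventually (\<lambda>n. q - 1 / real n \<le> real (m n) / real n) sequentially"
      using eventually_ge_at_top[of 1]
    proof (rule eventually_mono)
      fix n :: nat assume "n \<ge> 1"
      then have np: "real n > 0" by simp
      have "q * real n - 1 \<le> real (m n)" using mfl[of n] by linarith
      then have "(q * real n - 1) / real n \<le> real (m n) / real n" using np by (intro divide_right_mono) auto
      then show "q - 1 / real n \<le> real (m n) / real n" using np by (simp add: diff_divide_distrib)
    qed
    show "eventually (\<lambda>n. real (m n) / real n \<le> q) sequentially"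
      using eventually_ge_at_top[of 1]
    proof (rule eventually_mono)
      fix n :: nat assume "n \<ge> 1"
      then have np: "real n > 0" by simp
      then show "real (m n) / real n \<le> q" using mfl[of n] by (simp add: divide_le_eq)
    qed
    show "(\<lambda>n. q - 1 / real n) \<longlonglongrightarrow> q"
      using tendsto_diff[OF tendsto_const lim_const_over_n[of 1], of q] by simp
  qed simp
  have lim_RHS: "RHS \<longlonglongrightarrow> 0 + q * (1 + C * 0 - 1 / beta)"
  proof -
    have e: "RHS = (\<lambda>n. 2 * (1 / real n) * (1 / real (l n)) + (real (m n) / real n) *
      (1 + C * (1 / real (l n)) - log 2 (real n) / real (l n)))"
      unfolding RHS_def by (rule ext) simp
    have t1': "(\<lambda>n. 2 * (1 / real n) * (1 / real (l n))) \<longlonglongrightarrow> 2 * 0 * 0"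
      by (rule tendsto_mult[OF tendsto_mult[OF tendsto_const lim_const_over_n] inv_l])
    have t2: "(\<lambda>n. 1 + C * (1 / real (l n)) - log 2 (real n) / real (l n)) \<longlonglongrightarrow> 1 + C * 0 - 1 / beta"
      by (rule tendsto_diff[OF tendsto_add[OF tendsto_const tendsto_mult[OF tendsto_const inv_l]] lim_log])
    show ?thesis unfolding e
      using tendsto_add[OF t1' tendsto_mult[OF lim_m t2]] by simp
  qed
  have "R \<le> 0 + q * (1 + C * 0 - 1 / beta)"
    by (rule LIMSEQ_le[OF lim_R lim_RHS]) (use ev_main in \<open>simp add: eventually_sequentially\<close>)
  then have Rq: "R \<le> q * (1 - 1 / beta)" by simp
  have "1 - 1 / beta \<ge> 0" using beta by simp
  moreover have "q \<le> pc + delta" using delta by (simp add: q_def)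
  ultimately have "q * (1 - 1 / beta) \<le> (pc + delta) * (1 - 1 / beta)" by (rule mult_right_mono[rotated])
  then show ?thesis using Rq by linarith
qed

end
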